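(* Let $p_\theta(x,z)$ be a joint probability density on $\mathcal{X}\times\mathcal{Z}$ with marginals $p_\theta(x)$, $p_\theta(z)$ and conditionals $p_\theta(x\mid z)$, $p_\theta(z\mid x)$. Let $p_{\mathrm{data}}(x)$ be a probability density on $\mathcal{X}$ and $q_\phi(z\mid x)$ a conditional density on $\mathcal{Z}$ for each $x$; set $q_\phi(x,z)=p_{\mathrm{data}}(x)\,q_\phi(z\mid x)$, $q_\phi(z)=\int p_{\mathrm{data}}(x)q_\phi(z\mid x)\,\mathrm{d}x$ and $q_\phi(x\mid z)=q_\phi(x,z)/q_\phi(z)$. Consider the three conditions (L) Likelihood Consistency: $p_\theta(x\mid z)=q_\phi(x\mid z)$ for all $x,z$; (P) Prior Consistency: $p_\theta(z)=q_\phi(z)$ for all $z$; (Q) Posterior Consistency: $p_\theta(z\mid x)=q_\phi(z\mid x)$ for all $x,z$. Then: 1. If (L) and (P) hold, then (Q) holds and $p_\theta(x)=p_{\mathrm{data}}(x)$. 2. If (L) and (Q) hold, then (P) holds and $p_\theta(x)=p_{\mathrm{data}}(x)$. 3. If (Q) and (P) hold and the family $\{q_\phi(x\mid z)\}_z$ is complete, then $p_\theta(x)=p_{\mathrm{data}}(x)$ (almost everywhere) and (L) holds.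
   Context: All densities are assumed strictly positive so that conditionals and ratios are defined. The family $\{q_\phi(\cdot\mid z)\}_{z\in\mathcal{Z}}$ is called complete if for every measurable $g$ on $\mathcal{X}$ that is integrable under each $q_\phi(\cdot\mid z)$, $\mathbb{E}_{x\sim q_\phi(x\mid z)}[g(x)]=0$ for all $z$ implies $g=0$ almost everywhere. *)

theory Defs
  imports "HOL-Analysis.Analysis"
begin

text \<open>Densities are taken with respect to sigma-finite reference measures MX on X and MZ on Z.
  The joint density p_theta is a function p :: x => z => real.  The encoder q_phi(z|x)
  is qzx x z.\<close>

definition marg_x :: "'z measure \<Rightarrow> ('x \<Rightarrow> 'z \<Rightarrow> real) \<Rightarrow> 'x \<Rightarrow> real" where
  "marg_x MZ p x = (\<integral>z. p x z \<partial>MZ)"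

definition marg_z :: "'x measure \<Rightarrow> ('x \<Rightarrow> 'z \<Rightarrow> real) \<Rightarrow> 'z \<Rightarrow> real" where
  "marg_z MX p z = (\<integral>x. p x z \<partial>MX)"

definition cond_x_given_z :: "'x measure \<Rightarrow> ('x \<Rightarrow> 'z \<Rightarrow> real) \<Rightarrow> 'x \<Rightarrow> 'z \<Rightarrow> real" where
  "cond_x_given_z MX p x z = p x z / marg_z MX p z"

definition cond_z_given_x :: "'z measure \<Rightarrow> ('x \<Rightarrow> 'z \<Rightarrow> real) \<Rightarrow> 'x \<Rightarrow> 'z \<Rightarrow> real" where
  "cond_z_given_x MZ p x z = p x z / marg_x MZ p x"

definition q_joint :: "('x \<Rightarrow> real) \<Rightarrow> ('x \<Rightarrow> 'z \<Rightarrow> real) \<Rightarrow> 'x \<Rightarrow> 'z \<Rightarrow> real" where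
  "q_joint pdata qzx x z = pdata x * qzx x z"

definition q_prior :: "'x measure \<Rightarrow> ('x \<Rightarrow> real) \<Rightarrow> ('x \<Rightarrow> 'z \<Rightarrow> real) \<Rightarrow> 'z \<Rightarrow> real" where
  "q_prior MX pdata qzx z = (\<integral>x. pdata x * qzx x z \<partial>MX)"

definition q_post :: "'x measure \<Rightarrow> ('x \<Rightarrow> real) \<Rightarrow> ('x \<Rightarrow> 'z \<Rightarrow> real) \<Rightarrow> 'x \<Rightarrow> 'z \<Rightarrow> real" where
  "q_post MX pdata qzx x z = q_joint pdata qzx x z / q_prior MX pdata qzx z"

definition complete_family :: "'x measure \<Rightarrow> 'z measure \<Rightarrow> ('x \<Rightarrow> 'z \<Rightarrow> real) \<Rightarrow> bool" where
  "complete_family MX MZ k \<longleftrightarrow>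
     (\<forall>g \<in> borel_measurable MX.
        (\<forall>z \<in> space MZ. integrable MX (\<lambda>x. k x z * g x)) \<longrightarrow>
        (\<forall>z \<in> space MZ. (\<integral>x. k x z * g x \<partial>MX) = 0) \<longrightarrow>
        (AE x in MX. g x = 0))"

end

theory Submission
  imports Defs
begin

theorem corollary1:
  fixes MX :: "'x measure" and MZ :: "'z measure"
    and p :: "'x \<Rightarrow> 'z \<Rightarrow> real"
    and pdata :: "'x \<Rightarrow> real"
    and qzx :: "'x \<Rightarrow> 'z \<Rightarrow> real"
  assumes sfX: "sigma_finite_measure MX" and sfZ: "sigma_finite_measure MZ"
    and p_meas: "(\<lambda>(x, z). p x z) \<in> borel_measurable (MX \<Otimes>\<^sub>M MZ)"
    and p_pos: "\<forall>x\<in>space MX. \<forall>z\<in>space MZ. 0 < p x z"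
    and p_int: "integrable (MX \<Otimes>\<^sub>M MZ) (\<lambda>(x, z). p x z)"
    and p_one: "(\<integral>w. (\<lambda>(x, z). p x z) w \<partial>(MX \<Otimes>\<^sub>M MZ)) = 1"
    and pdata_meas: "pdata \<in> borel_measurable MX"
    and pdata_pos: "\<forall>x\<in>space MX. 0 < pdata x"
    and pdata_int: "integrable MX pdata"
    and pdata_one: "(\<integral>x. pdata x \<partial>MX) = 1"
    and q_meas: "(\<lambda>(x, z). qzx x z) \<in> borel_measurable (MX \<Otimes>\<^sub>M MZ)"
    and q_pos: "\<forall>x\<in>space MX. \<forall>z\<in>space MZ. 0 < qzx x z"
    and q_int: "\<forall>x\<in>space MX. integrable MZ (qzx x)"
    and q_one: "\<forall>x\<in>space MX. (\<integral>z. qzx x z \<partial>MZ) = 1"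
    and px_pos: "\<forall>x\<in>space MX. 0 < marg_x MZ p x"
    and pz_pos: "\<forall>z\<in>space MZ. 0 < marg_z MX p z"
    and qz_pos: "\<forall>z\<in>space MZ. 0 < q_prior MX pdata qzx z"
  defines "L \<equiv> (\<forall>x\<in>space MX. \<forall>z\<in>space MZ.
                  cond_x_given_z MX p x z = q_post MX pdata qzx x z)"
      and "P \<equiv> (\<forall>z\<in>space MZ. marg_z MX p z = q_prior MX pdata qzx z)"
      and "Q \<equiv> (\<forall>x\<in>space MX. \<forall>z\<in>space MZ. cond_z_given_x MZ p x z = qzx x z)"
  shows "(L \<and> P \<longrightarrow> Q \<and> (\<forall>x\<in>space MX. marg_x MZ p x = pdata x))
       \<and> (L \<and> Q \<longrightarrow> P \<and> (\<forall>x\<in>space MX. marg_x MZ p x = pdata x))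
       \<and> (Q \<and> P \<and> complete_family MX MZ (q_post MX pdata qzx) \<longrightarrow>
            (AE x in MX. marg_x MZ p x = pdata x)
          \<and> (AE x in MX. \<forall>z\<in>space MZ.
                cond_x_given_z MX p x z = q_post MX pdata qzx x z))"
proof -
  interpret X: sigma_finite_measure MX by (rule sfX)
  interpret Z: sigma_finite_measure MZ by (rule sfZ)
  interpret PS: pair_sigma_finite MX MZ by unfold_locales
  define pX where "pX = marg_x MZ p"
  define pZ where "pZ = marg_z MX p"
  define qZ where "qZ = q_prior MX pdata qzx"
  have pX_def': "\<And>x. pX x = (\<integral>z. p x z \<partial>MZ)" unfolding pX_def marg_x_def by simp
  have pZ_def': "\<And>z. pZ z = (\<integral>x. p x z \<partial>MX)" unfolding pZ_def marg_z_def by simp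
  have qZ_def': "\<And>z. qZ z = (\<integral>x. pdata x * qzx x z \<partial>MX)" unfolding qZ_def q_prior_def by simp
  have pX_meas: "pX \<in> borel_measurable MX"
    unfolding pX_def' using p_meas by (intro Z.borel_measurable_lebesgue_integral) simp
  have qzx_meas_x: "(\<lambda>x. qzx x z) \<in> borel_measurable MX" if "z \<in> space MZ" for z
    using measurable_Pair1[OF q_meas that] by simp
  have p_meas_x: "(\<lambda>x. p x z) \<in> borel_measurable MX" if "z \<in> space MZ" for z
    using measurable_Pair1[OF p_meas that] by simp
  have p_int_x: "integrable MX (\<lambda>x. p x z)" if "z \<in> space MZ" for z
  proof (rule ccontr)
    assume "\<not> ?thesis"
    then have "pZ z = 0" unfolding pZ_def' by (rule not_integrable_integral_eq)
    with pz_pos that show False unfolding pZ_def by auto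
  qed
  have q_int_x: "integrable MX (\<lambda>x. pdata x * qzx x z)" if "z \<in> space MZ" for z
  proof (rule ccontr)
    assume "\<not> ?thesis"
    then have "qZ z = 0" unfolding qZ_def' by (rule not_integrable_integral_eq)
    with qz_pos that show False unfolding qZ_def by auto
  qed
  have pXpos: "\<And>x. x \<in> space MX \<Longrightarrow> 0 < pX x" using px_pos pX_def by auto
  have pZpos: "\<And>z. z \<in> space MZ \<Longrightarrow> 0 < pZ z" using pz_pos pZ_def by auto
  have qZpos: "\<And>z. z \<in> space MZ \<Longrightarrow> 0 < qZ z" using qz_pos qZ_def by auto
  have pdpos: "\<And>x. x \<in> space MX \<Longrightarrow> 0 < pdata x" using pdata_pos by auto
  have qpos: "\<And>x z. x \<in> space MX \<Longrightarrow> z \<in> space MZ \<Longrightarrow> 0 < qzx x z" using q_pos by auto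
  have Qe: "Q \<longleftrightarrow> (\<forall>x\<in>space MX. \<forall>z\<in>space MZ. p x z = pX x * qzx x z)"
  proof
    assume "Q"
    then show "\<forall>x\<in>space MX. \<forall>z\<in>space MZ. p x z = pX x * qzx x z"
      unfolding Q_def cond_z_given_x_def pX_def[symmetric]
      using pXpos by (metis divide_eq_eq less_irrefl mult.commute)
  next
    assume "\<forall>x\<in>space MX. \<forall>z\<in>space MZ. p x z = pX x * qzx x z"
    then show Q
      unfolding Q_def cond_z_given_x_def pX_def[symmetric]
      using pXpos by (metis nonzero_mult_div_cancel_left less_irrefl)
  qed
  have Le: "L \<longleftrightarrow> (\<forall>x\<in>space MX. \<forall>z\<in>space MZ. p x z / pZ z = pdata x * qzx x z / qZ z)"
    unfolding L_def cond_x_given_z_def q_post_def q_joint_def pZ_def qZ_def by simp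
  have Pe: "P \<longleftrightarrow> (\<forall>z\<in>space MZ. pZ z = qZ z)"
    unfolding P_def pZ_def qZ_def by simp
  have total: "(\<integral>x. pX x \<partial>MX) = 1"
    using PS.integral_fst'[OF p_int] p_one unfolding pX_def' by simp
  have part1: "L \<and> P \<longrightarrow> Q \<and> (\<forall>x\<in>space MX. pX x = pdata x)"
  proof
    assume LP: "L \<and> P"
    have eq: "p x z = pdata x * qzx x z" if "x \<in> space MX" "z \<in> space MZ" for x z
    proof -
      have "p x z / pZ z = pdata x * qzx x z / pZ z" using LP that unfolding Le Pe by metis
      thus ?thesis using pZpos[OF that(2)] by (simp add: field_simps)
    qed
    have px: "pX x = pdata x" if x: "x \<in> space MX" for x
    proof -
      have "pX x = (\<integral>z. pdata x * qzx x z \<partial>MZ)" unfolding pX_def'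
        using eq x by (intro Bochner_Integration.integral_cong) auto
      also have "\<dots> = pdata x" using q_one x by simp
      finally show ?thesis .
    qed
    show "Q \<and> (\<forall>x\<in>space MX. pX x = pdata x)" unfolding Qe using px eq by auto
  qed
  have part2: "L \<and> Q \<longrightarrow> P \<and> (\<forall>x\<in>space MX. pX x = pdata x)"
  proof
    assume LQ: "L \<and> Q"
    have rel: "pX x * qZ z = pdata x * pZ z" if "x \<in> space MX" "z \<in> space MZ" for x z
    proof -
      have "pX x * qzx x z / pZ z = pdata x * qzx x z / qZ z" using LQ that unfolding Le Qe by auto
      thus ?thesis using pZpos[OF that(2)] qZpos[OF that(2)] qpos[OF that]
        by (simp add: field_simps)
    qed
    show "P \<and> (\<forall>x\<in>space MX. pX x = pdata x)"
    proof (cases "space MZ = {}")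
      case True
      show ?thesis
      proof (cases "space MX = {}")
        case True2: True
        show ?thesis using True True2 unfolding Pe by auto
      next
        case False
        then obtain x where x: "x \<in> space MX" by auto
        have "pX x = 0" unfolding pX_def' using True by (rule Bochner_Integration.integral_empty)
        with pXpos[OF x] show ?thesis by simp
      qed
    next
      case False
      then obtain z0 where z0: "z0 \<in> space MZ" by auto
      define c where "c = pZ z0 / qZ z0"
      have pxc: "pX x = c * pdata x" if "x \<in> space MX" for x
        using rel[OF that z0] qZpos[OF z0] unfolding c_def by (simp add: field_simps)
      have "1 = (\<integral>x. c * pdata x \<partial>MX)" unfolding total[symmetric]
        using pxc by (intro Bochner_Integration.integral_cong) auto
      also have "\<dots> = c" using pdata_one by simp
      finally have c1: "c = 1" by simp
      have "pZ z = qZ z" if z: "z \<in> space MZ" for z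
      proof (cases "space MX = {}")
        case True
        then show ?thesis unfolding pZ_def' qZ_def' by (simp add: Bochner_Integration.integral_empty)
      next
        case False
        then obtain x where x: "x \<in> space MX" by auto
        show ?thesis using rel[OF x z] pxc[OF x] c1 pdpos[OF x] by simp
      qed
      then show ?thesis unfolding Pe using pxc c1 by auto
    qed
  qed
  have part3: "Q \<and> P \<and> complete_family MX MZ (q_post MX pdata qzx) \<longrightarrow>
            (AE x in MX. pX x = pdata x)
          \<and> (AE x in MX. \<forall>z\<in>space MZ.
                cond_x_given_z MX p x z = q_post MX pdata qzx x z)"
  proof
    assume QPC: "Q \<and> P \<and> complete_family MX MZ (q_post MX pdata qzx)"
    have peq: "\<And>x z. x \<in> space MX \<Longrightarrow> z \<in> space MZ \<Longrightarrow> p x z = pX x * qzx x z"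
      using QPC unfolding Qe by auto
    have PP: "\<And>z. z \<in> space MZ \<Longrightarrow> pZ z = qZ z" using QPC unfolding Pe by auto
    define g where "g x = (pX x - pdata x) / pdata x" for x
    have g_meas: "g \<in> borel_measurable MX" unfolding g_def using pX_meas pdata_meas by measurable
    have kg: "q_post MX pdata qzx x z * g x = (p x z - pdata x * qzx x z) / qZ z"
      if "x \<in> space MX" "z \<in> space MZ" for x z
      unfolding q_post_def q_joint_def qZ_def[symmetric] g_def
      using peq[OF that] pdpos[OF that(1)] qZpos[OF that(2)] by (simp add: field_simps)
    have AEg: "AE x in MX. g x = 0"
    proof -
      have "complete_family MX MZ (q_post MX pdata qzx)" using QPC by auto
      moreover have "\<forall>z\<in>space MZ. integrable MX (\<lambda>x. q_post MX pdata qzx x z * g x)"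
      proof
        fix z assume z: "z \<in> space MZ"
        have "integrable MX (\<lambda>x. (p x z - pdata x * qzx x z) / qZ z)"
          using p_int_x[OF z] q_int_x[OF z] by auto
        moreover have "integrable MX (\<lambda>x. q_post MX pdata qzx x z * g x) \<longleftrightarrow>
            integrable MX (\<lambda>x. (p x z - pdata x * qzx x z) / qZ z)"
          by (rule Bochner_Integration.integrable_cong) (auto simp: kg z)
        ultimately show "integrable MX (\<lambda>x. q_post MX pdata qzx x z * g x)" by simp
      qed
      moreover have "\<forall>z\<in>space MZ. (\<integral>x. q_post MX pdata qzx x z * g x \<partial>MX) = 0"
      proof
        fix z assume z: "z \<in> space MZ"
        have "(\<integral>x. q_post MX pdata qzx x z * g x \<partial>MX) = (\<integral>x. (p x z - pdata x * qzx x z) / qZ z \<partial>MX)"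
          using z by (intro Bochner_Integration.integral_cong) (auto simp: kg)
        also have "\<dots> = (pZ z - qZ z) / qZ z"
          unfolding pZ_def' qZ_def'
          using p_int_x[OF z] q_int_x[OF z] by simp
        also have "\<dots> = 0" using PP[OF z] by simp
        finally show "(\<integral>x. q_post MX pdata qzx x z * g x \<partial>MX) = 0" .
      qed
      ultimately show ?thesis using g_meas unfolding complete_family_def by blast
    qed
    have AE1: "AE x in MX. pX x = pdata x"
      using AEg
    proof (rule AE_mp)
      show "AE x in MX. g x = 0 \<longrightarrow> pX x = pdata x"
      proof (intro AE_I2 impI)
        fix x assume x: "x \<in> space MX" and "g x = 0"
        then show "pX x = pdata x" using pdpos[OF x] unfolding g_def by simp
      qed
    qed
    have AE2: "AE x in MX. \<forall>z\<in>space MZ. cond_x_given_z MX p x z = q_post MX pdata qzx x z"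
      using AE1
    proof (rule AE_mp)
      show "AE x in MX. pX x = pdata x \<longrightarrow> (\<forall>z\<in>space MZ. cond_x_given_z MX p x z = q_post MX pdata qzx x z)"
        by (intro AE_I2) (auto simp: cond_x_given_z_def q_post_def q_joint_def pZ_def[symmetric]
              qZ_def[symmetric] peq PP)
    qed
    show "(AE x in MX. pX x = pdata x) \<and> (AE x in MX. \<forall>z\<in>space MZ.
                cond_x_given_z MX p x z = q_post MX pdata qzx x z)" using AE1 AE2 by simp
  qed
  show ?thesis using part1 part2 part3 unfolding pX_def by simp
qed

end
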